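(* Let $\mathcal{F}:\mathcal{T}^Y\to\mathcal{T}^Z$ be a (holomorphic, projective) cover between trees of spheres with portrait $\mathbf{F}$ and of degree $D$. Let $v$ be an internal vertex of $T^Y$ with $\deg(v)=D$, and let $(f_n,y_n,z_n)_n$ be a sequence of rational maps marked by $\mathbf{F}$ converging to $\mathcal{F}$ via $(\phi^Y_n,\phi^Z_n)$. Then $\phi^Z_{n,F(v)}\circ f_n\circ(\phi^Y_{n,v})^{-1}:\mathbb{S}_v\to\mathbb{S}_{F(v)}$ converges uniformly on $\mathbb{S}_v$ to $f_v$.
   Context: Trees: finite connected graphs without cycles (vertices $V$, edges $2$-element subsets, $E_v$ the edges at $v$); leaves have valence $1$, the others are internal ($IV$); trees are stable (internal vertices have valence $\ge3$). For $e\in E_v$, $B_v(e)$ is the component of the tree minus $v$ containing $e$. A projective tree of spheres $\mathcal{T}^X$ marked by a finite set $X$ ($\ge3$ elements) is a tree $T^X$ with leaf set $X$ and, for each internal vertex $v$, a sphere $\mathbb{S}_v$ with a projective structure and an injection $i_v:E_v\to\mathbb{S}_v$; $X_v=i_v(E_v)$; $a_v(x)=i_v(e)$ for $x\in B_v(e)$. A holomorphic cover $\mathcal{F}:\mathcal{T}^Y\to\mathcal{T}^Z$: a map $F:T^Y\to T^Z$ sending vertices to vertices and edges $\{v,w\}$ to edges $\{F(v),F(w)\}$, $Y$ into $Z$ and $IV^Y$ into $IV^Z$, with holomorphic branched coverings $f_v:\mathbb{S}_v\to\mathbb{S}_{F(v)}$ ($v\in IV^Y$) which restrict to coverings $\mathbb{S}_v\setminus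 Y_v\to\mathbb{S}_{F(v)}\setminus Z_{F(v)}$, satisfy $f_v\circ i_v=i_{F(v)}\circ F$ on $E_v$, and have equal local degrees at both attaching points of an edge between internal vertices. $\deg(v)=\deg f_v$; for a leaf $y$ attached to internal $v$ by $e$, $\deg(y)=\deg_{i_v(e)}f_v$. The degree $D$ is $\sum_{v'\in F^{-1}(w)}\deg(v')$, independent of the vertex $w$. The portrait of $\mathcal{F}$ is $(F|_Y,\deg|_Y)$. A portrait of degree $D$ is $\mathbf{F}=(F,\deg)$, $F:Y\to Z$, $\deg:Y\to\mathbb{N}\setminus\{0\}$ with $\sum_{a\in Y}(\deg(a)-1)=2D-2$ and $\sum_{a\in F^{-1}(b)}\deg(a)=D$ for all $b\in Z$. A rational map marked by $\mathbf{F}$ is $(f,y,z)$ with $f$ rational of degree $D$, $y:Y\to\hat{\mathbb{C}}$ and $z:Z\to\hat{\mathbb{C}}$ injective, $f\circ y=z\circ F$ and $\deg_{y(a)}f=\deg(a)$. Convergence: $(f_n,y_n,z_n)\to\mathcal{F}$ via $(\phi^Y_n,\phi^Z_n)$ if the $(f_n,y_n,z_n)$ are marked by the portrait of $\mathcal{F}$ and for each $v\in IV^Y$, $w=F(v)$, there are projective isomorphisms $\phi^Y_{n,v}:\hat{\mathbb{C}}\to\mathbb{S}_v$, $\phi^Z_{n,w}:\hat{\mathbb{C}}\to\mathbb{S}_w$ with $\phi^Y_{n,v}\circ y_n\to a^Y_v$, $\phi^Z_{n,w}\circ z_n\to a^Z_w$, and $\phi^Z_{n,w}\circ f_n\circ(\phi^Y_{n,v})^{-1}\to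 f_v$ locally uniformly on $\mathbb{S}_v\setminus Y_v$. *)

theory Defs
  imports "HOL-Analysis.Analysis" "HOL-Computational_Algebra.Polynomial_Factorial"
begin

text \<open>The Riemann sphere is modelled as complex option: Some z is the finite point z,
  None is the point at infinity.  Its metric is the chordal metric.\<close>

type_synonym csphere = "complex option"

fun sdist :: "csphere \<Rightarrow> csphere \<Rightarrow> real" where
  "sdist (Some z) (Some w) = 2 * cmod (z - w) / sqrt ((1 + (cmod z)\<^sup>2) * (1 + (cmod w)\<^sup>2))"
| "sdist (Some z) None = 2 / sqrt (1 + (cmod z)\<^sup>2)"
| "sdist None (Some w) = 2 / sqrt (1 + (cmod w)\<^sup>2)"
| "sdist None None = 0"

definition rat_eval :: "complex poly \<Rightarrow> complex poly \<Rightarrow> csphere \<Rightarrow> csphere" where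
  "rat_eval p q a = (case a of
      Some z \<Rightarrow> (if poly q z = 0 then None else Some (poly p z / poly q z))
    | None \<Rightarrow> (if degree p > degree q then None
               else if degree p = degree q then Some (lead_coeff p / lead_coeff q)
               else Some 0))"

definition rational_map :: "nat \<Rightarrow> (csphere \<Rightarrow> csphere) \<Rightarrow> bool" where
  "rational_map D g \<longleftrightarrow> D \<ge> 1 \<and>
     (\<exists>p q. coprime p q \<and> max (degree p) (degree q) = D \<and> g = rat_eval p q)"

definition rat_rep :: "(csphere \<Rightarrow> csphere) \<Rightarrow> complex poly \<times> complex poly" where
  "rat_rep g = (SOME (p, q). coprime p q \<and> max (degree p) (degree q) \<ge> 1 \<and> g = rat_eval p q)"

definition rat_degree :: "(csphere \<Rightarrow> csphere) \<Rightarrow> nat" where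
  "rat_degree g = (case rat_rep g of (p, q) \<Rightarrow> max (degree p) (degree q))"

text \<open>Local degree of p/q at a point a (multiplicity of a as a solution of p/q = (p/q)(a)).\<close>
definition ldeg_pq :: "complex poly \<Rightarrow> complex poly \<Rightarrow> csphere \<Rightarrow> nat" where
  "ldeg_pq p q a = (case a of
      Some z \<Rightarrow> (case rat_eval p q (Some z) of
                   Some b \<Rightarrow> order z (p - smult b q)
                 | None \<Rightarrow> order z q)
    | None \<Rightarrow> (case rat_eval p q None of
                   Some b \<Rightarrow> max (degree p) (degree q) - degree (p - smult b q)
                 | None \<Rightarrow> max (degree p) (degree q) - degree q))"

definition locdeg :: "(csphere \<Rightarrow> csphere) \<Rightarrow> csphere \<Rightarrow> nat" where
  "locdeg g a = (case rat_rep g of (p, q) \<Rightarrow> ldeg_pq p q a)"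

definition moebius :: "(csphere \<Rightarrow> csphere) \<Rightarrow> bool" where
  "moebius g \<longleftrightarrow> rational_map 1 g"

definition adj :: "'v set set \<Rightarrow> ('v \<times> 'v) set" where
  "adj E = {(a, b). {a, b} \<in> E}"

definition edges_at :: "'v set set \<Rightarrow> 'v \<Rightarrow> 'v set set" where
  "edges_at E v = {e \<in> E. v \<in> e}"

definition is_cycle :: "'v set set \<Rightarrow> 'v list \<Rightarrow> bool" where
  "is_cycle E cs \<longleftrightarrow> length cs \<ge> 3 \<and> distinct cs \<and>
     (\<forall>k < length cs. {cs ! k, cs ! ((k + 1) mod length cs)} \<in> E)"

definition tree :: "'v set \<Rightarrow> 'v set set \<Rightarrow> bool" where
  "tree V E \<longleftrightarrow> finite V \<and>
     (\<forall>e\<in>E. \<exists>a b. a \<in> V \<and> b \<in> V \<and> a \<noteq> b \<and> e = {a, b}) \<and>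
     (\<forall>a\<in>V. \<forall>b\<in>V. (a, b) \<in> (adj E)\<^sup>*) \<and>
     \<not> (\<exists>cs. is_cycle E cs)"

text \<open>B_v(e): vertices of the component of the tree minus v containing the edge e at v.\<close>
definition branch :: "'v set \<Rightarrow> 'v set set \<Rightarrow> 'v \<Rightarrow> 'v set \<Rightarrow> 'v set" where
  "branch V E v e = {x \<in> V. \<exists>u. u \<noteq> v \<and> e = {v, u} \<and>
       (u, x) \<in> (adj E \<inter> ((V - {v}) \<times> (V - {v})))\<^sup>*}"

text \<open>A projective tree of spheres marked by X: tree (V,E) with leaf set X, stable,
  and for each internal vertex v an injection i v of the edges at v into the sphere
  S_v; each projective sphere S_v is identified with the Riemann sphere.\<close>
definition tree_of_spheres ::
  "'v set \<Rightarrow> 'v set set \<Rightarrow> 'v set \<Rightarrow> ('v \<Rightarrow> 'v set \<Rightarrow> csphere) \<Rightarrow> bool" where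
  "tree_of_spheres V E X i \<longleftrightarrow> tree V E \<and> X \<subseteq> V \<and> finite X \<and> card X \<ge> 3 \<and>
     (\<forall>x\<in>V. card (edges_at E x) = 1 \<longleftrightarrow> x \<in> X) \<and>
     (\<forall>v\<in>V - X. card (edges_at E v) \<ge> 3 \<and> inj_on (i v) (edges_at E v))"

definition Xset :: "'v set set \<Rightarrow> ('v \<Rightarrow> 'v set \<Rightarrow> csphere) \<Rightarrow> 'v \<Rightarrow> csphere set" where
  "Xset E i v = i v ` edges_at E v"

definition attach ::
  "'v set \<Rightarrow> 'v set set \<Rightarrow> ('v \<Rightarrow> 'v set \<Rightarrow> csphere) \<Rightarrow> 'v \<Rightarrow> 'v \<Rightarrow> csphere" where
  "attach V E i v x = i v (THE e. e \<in> edges_at E v \<and> x \<in> branch V E v e)"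

definition leaf_edge :: "'v set set \<Rightarrow> 'v \<Rightarrow> 'v set" where
  "leaf_edge E y = (THE e. e \<in> E \<and> y \<in> e)"

definition leaf_nbr :: "'v set set \<Rightarrow> 'v \<Rightarrow> 'v" where
  "leaf_nbr E y = (THE u. u \<in> leaf_edge E y \<and> u \<noteq> y)"

definition holo_cover ::
  "'v set \<Rightarrow> 'v set set \<Rightarrow> 'v set \<Rightarrow> ('v \<Rightarrow> 'v set \<Rightarrow> csphere) \<Rightarrow>
   'w set \<Rightarrow> 'w set set \<Rightarrow> 'w set \<Rightarrow> ('w \<Rightarrow> 'w set \<Rightarrow> csphere) \<Rightarrow>
   ('v \<Rightarrow> 'w) \<Rightarrow> ('v \<Rightarrow> csphere \<Rightarrow> csphere) \<Rightarrow> bool" where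
  "holo_cover VY EY Y iY VZ EZ Z iZ F f \<longleftrightarrow>
     tree_of_spheres VY EY Y iY \<and> tree_of_spheres VZ EZ Z iZ \<and>
     (\<forall>v\<in>VY. F v \<in> VZ) \<and>
     (\<forall>e\<in>EY. F ` e \<in> EZ) \<and>
     F ` Y \<subseteq> Z \<and> F ` (VY - Y) \<subseteq> VZ - Z \<and>
     (\<forall>v\<in>VY - Y.
        (\<exists>d. rational_map d (f v)) \<and>
        (\<forall>e\<in>edges_at EY v. f v (iY v e) = iZ (F v) (F ` e)) \<and>
        (\<forall>a. a \<notin> Xset EY iY v \<longrightarrow>
               f v a \<notin> Xset EZ iZ (F v) \<and> locdeg (f v) a = 1)) \<and>
     (\<forall>e\<in>EY. \<forall>v u. e = {v, u} \<and> v \<noteq> u \<and> v \<notin> Y \<and> u \<notin> Y \<longrightarrow>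
        locdeg (f v) (iY v e) = locdeg (f u) (iY u e))"

definition vdeg ::
  "'v set set \<Rightarrow> 'v set \<Rightarrow> ('v \<Rightarrow> 'v set \<Rightarrow> csphere) \<Rightarrow> ('v \<Rightarrow> csphere \<Rightarrow> csphere) \<Rightarrow> 'v \<Rightarrow> nat" where
  "vdeg EY Y iY f v = (if v \<in> Y
       then locdeg (f (leaf_nbr EY v)) (iY (leaf_nbr EY v) (leaf_edge EY v))
       else rat_degree (f v))"

definition holo_cover_deg ::
  "'v set \<Rightarrow> 'v set set \<Rightarrow> 'v set \<Rightarrow> ('v \<Rightarrow> 'v set \<Rightarrow> csphere) \<Rightarrow>
   'w set \<Rightarrow> 'w set set \<Rightarrow> 'w set \<Rightarrow> ('w \<Rightarrow> 'w set \<Rightarrow> csphere) \<Rightarrow>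
   ('v \<Rightarrow> 'w) \<Rightarrow> ('v \<Rightarrow> csphere \<Rightarrow> csphere) \<Rightarrow> nat \<Rightarrow> bool" where
  "holo_cover_deg VY EY Y iY VZ EZ Z iZ F f D \<longleftrightarrow>
     holo_cover VY EY Y iY VZ EZ Z iZ F f \<and>
     (\<forall>w\<in>VZ. (\<Sum>v\<in>{v \<in> VY. F v = w}. vdeg EY Y iY f v) = D)"

definition marked_rat ::
  "'v set \<Rightarrow> 'w set \<Rightarrow> ('v \<Rightarrow> 'w) \<Rightarrow> ('v \<Rightarrow> nat) \<Rightarrow> nat \<Rightarrow>
   (csphere \<Rightarrow> csphere) \<Rightarrow> ('v \<Rightarrow> csphere) \<Rightarrow> ('w \<Rightarrow> csphere) \<Rightarrow> bool" where
  "marked_rat Y Z F degY D g y z \<longleftrightarrow> rational_map D g \<and> inj_on y Y \<and> inj_on z Z \<and>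
     (\<forall>a\<in>Y. g (y a) = z (F a) \<and> locdeg g (y a) = degY a)"

definition sconv :: "(nat \<Rightarrow> csphere) \<Rightarrow> csphere \<Rightarrow> bool" where
  "sconv xs x \<longleftrightarrow> (\<lambda>n. sdist (xs n) x) \<longlonglongrightarrow> 0"

definition loc_unif_conv ::
  "csphere set \<Rightarrow> (nat \<Rightarrow> csphere \<Rightarrow> csphere) \<Rightarrow> (csphere \<Rightarrow> csphere) \<Rightarrow> bool" where
  "loc_unif_conv U gs g \<longleftrightarrow> (\<forall>p\<in>U. \<exists>r>0. {q. sdist p q < r} \<subseteq> U \<and>
     (\<forall>\<epsilon>>0. eventually (\<lambda>n. \<forall>q. sdist p q < r \<longrightarrow> sdist (gs n q) (g q) < \<epsilon>) sequentially))"

definition unif_conv :: "(nat \<Rightarrow> csphere \<Rightarrow> csphere) \<Rightarrow> (csphere \<Rightarrow> csphere) \<Rightarrow> bool" where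
  "unif_conv gs g \<longleftrightarrow>
     (\<forall>\<epsilon>>0. eventually (\<lambda>n. \<forall>q. sdist (gs n q) (g q) < \<epsilon>) sequentially)"

definition converges_to_cover ::
  "'v set \<Rightarrow> 'v set set \<Rightarrow> 'v set \<Rightarrow> ('v \<Rightarrow> 'v set \<Rightarrow> csphere) \<Rightarrow>
   'w set \<Rightarrow> 'w set set \<Rightarrow> 'w set \<Rightarrow> ('w \<Rightarrow> 'w set \<Rightarrow> csphere) \<Rightarrow>
   ('v \<Rightarrow> 'w) \<Rightarrow> ('v \<Rightarrow> csphere \<Rightarrow> csphere) \<Rightarrow> nat \<Rightarrow>
   (nat \<Rightarrow> csphere \<Rightarrow> csphere) \<Rightarrow> (nat \<Rightarrow> 'v \<Rightarrow> csphere) \<Rightarrow> (nat \<Rightarrow> 'w \<Rightarrow> csphere) \<Rightarrow>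
   (nat \<Rightarrow> 'v \<Rightarrow> csphere \<Rightarrow> csphere) \<Rightarrow> (nat \<Rightarrow> 'w \<Rightarrow> csphere \<Rightarrow> csphere) \<Rightarrow> bool" where
  "converges_to_cover VY EY Y iY VZ EZ Z iZ F f D gs ys zs phiY phiZ \<longleftrightarrow>
     (\<forall>n. marked_rat Y Z F (vdeg EY Y iY f) D (gs n) (ys n) (zs n)) \<and>
     (\<forall>v\<in>VY - Y.
        (\<forall>n. moebius (phiY n v) \<and> moebius (phiZ n (F v))) \<and>
        (\<forall>x\<in>Y. sconv (\<lambda>n. phiY n v (ys n x)) (attach VY EY iY v x)) \<and>
        (\<forall>x\<in>Z. sconv (\<lambda>n. phiZ n (F v) (zs n x)) (attach VZ EZ iZ (F v) x)) \<and>
        loc_unif_conv (- Xset EY iY v)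
          (\<lambda>n. phiZ n (F v) \<circ> gs n \<circ> inv (phiY n v)) (f v))"

end

theory Submission
  imports Defs "HOL-Computational_Algebra.Field_as_Ring"
begin

definition proj :: "complex \<times> complex \<Rightarrow> csphere" where
  "proj x = (if snd x = 0 then None else Some (fst x / snd x))"

definition hf :: "nat \<Rightarrow> complex poly \<Rightarrow> complex \<times> complex \<Rightarrow> complex" where
  "hf m r x = (\<Sum>k\<le>m. coeff r k * fst x ^ k * snd x ^ (m - k))"

definition crs :: "complex \<times> complex \<Rightarrow> complex \<times> complex \<Rightarrow> complex" where
  "crs a b = fst a * snd b - snd a * fst b"

lemma sdist_proj:
  assumes "a \<noteq> 0" "b \<noteq> 0"
  shows "sdist (proj a) (proj b) = 2 * cmod (crs a b) / (norm a * norm b)"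
proof -
  obtain a1 a2 b1 b2 where A: "a = (a1,a2)" "b = (b1,b2)" by (cases a, cases b) auto
  have na: "norm a = sqrt ((cmod a1)\<^sup>2 + (cmod a2)\<^sup>2)" using A by (simp add: norm_Pair)
  have nb: "norm b = sqrt ((cmod b1)\<^sup>2 + (cmod b2)\<^sup>2)" using A by (simp add: norm_Pair)
  have pa: "norm a > 0" "norm b > 0" using assms by auto
  show ?thesis
  proof (cases "a2 = 0")
    case True
    then have a1: "a1 \<noteq> 0" using assms A by (auto simp: zero_prod_def)
    show ?thesis
    proof (cases "b2 = 0")
      case True
      then show ?thesis using \<open>a2 = 0\<close> A by (simp add: proj_def crs_def)
    next
      case False
      have e: "1 + (cmod (b1/b2))\<^sup>2 = ((cmod b1)\<^sup>2 + (cmod b2)\<^sup>2) / (cmod b2)\<^sup>2"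
        using False by (simp add: norm_divide power_divide field_simps)
      have "sqrt (1 + (cmod (b1/b2))\<^sup>2) = norm b / cmod b2"
        unfolding e nb using False by (simp add: real_sqrt_divide)
      then have "sdist (proj a) (proj b) = 2 * cmod b2 / norm b"
        using \<open>a2 = 0\<close> False A by (simp add: proj_def)
      then show ?thesis using \<open>a2 = 0\<close> False A a1 pa
        by (simp add: crs_def norm_mult field_simps)
    qed
  next
    case False
    show ?thesis
    proof (cases "b2 = 0")
      case True
      then have b1: "b1 \<noteq> 0" using assms A by (auto simp: zero_prod_def)
      have e: "1 + (cmod (a1/a2))\<^sup>2 = ((cmod a1)\<^sup>2 + (cmod a2)\<^sup>2) / (cmod a2)\<^sup>2"
        using False by (simp add: norm_divide power_divide field_simps)
      have "sqrt (1 + (cmod (a1/a2))\<^sup>2) = norm a / cmod a2"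
        unfolding e na using False by (simp add: real_sqrt_divide)
      then have "sdist (proj a) (proj b) = 2 * cmod a2 / norm a"
        using True False A by (simp add: proj_def)
      then show ?thesis using True False A b1 pa
        by (simp add: crs_def norm_mult field_simps)
    next
      case b2: False
      have e: "1 + (cmod (a1/a2))\<^sup>2 = ((cmod a1)\<^sup>2 + (cmod a2)\<^sup>2) / (cmod a2)\<^sup>2"
        using False by (simp add: norm_divide power_divide field_simps)
      have ea: "sqrt (1 + (cmod (a1/a2))\<^sup>2) = norm a / cmod a2"
        unfolding e na using False by (simp add: real_sqrt_divide)
      have e2: "1 + (cmod (b1/b2))\<^sup>2 = ((cmod b1)\<^sup>2 + (cmod b2)\<^sup>2) / (cmod b2)\<^sup>2"
        using b2 by (simp add: norm_divide power_divide field_simps)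
      have eb: "sqrt (1 + (cmod (b1/b2))\<^sup>2) = norm b / cmod b2"
        unfolding e2 nb using b2 by (simp add: real_sqrt_divide)
      have d: "a1/a2 - b1/b2 = (a1*b2 - a2*b1) / (a2*b2)" using False b2 by (simp add: field_simps)
      have "sdist (proj a) (proj b) = 2 * (cmod (a1*b2 - a2*b1) / (cmod a2 * cmod b2)) /
          ((norm a / cmod a2) * (norm b / cmod b2))"
      proof -
        have "sdist (proj a) (proj b) = 2 * cmod (a1/a2 - b1/b2) / (sqrt (1 + (cmod (a1/a2))\<^sup>2) * sqrt (1 + (cmod (b1/b2))\<^sup>2))"
          using False b2 A by (simp add: proj_def real_sqrt_mult)
        also have "\<dots> = 2 * (cmod (a1*b2 - a2*b1) / (cmod a2 * cmod b2)) /
          ((norm a / cmod a2) * (norm b / cmod b2))" unfolding ea eb d by (simp add: norm_divide norm_mult)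
        finally show ?thesis .
      qed
      also have "\<dots> = 2 * cmod (crs a b) / (norm a * norm b)"
        using False b2 A pa by (simp add: crs_def field_simps)
      finally show ?thesis .
    qed
  qed
qed

lemma hf_w0: "hf m r (z, 0) = coeff r m * z ^ m"
proof -
  have "hf m r (z,0) = (\<Sum>k\<in>{m}. coeff r k * z ^ k * 0 ^ (m - k))"
    unfolding hf_def fst_conv snd_conv by (rule sum.mono_neutral_right) auto
  then show ?thesis by simp
qed

lemma poly_sum_le: "degree r \<le> m \<Longrightarrow> poly r (x::complex) = (\<Sum>k\<le>m. coeff r k * x ^ k)"
  apply (subst poly_altdef)
  by (rule sum.mono_neutral_left) (auto simp: coeff_eq_0)

lemma hf_wne: assumes "w \<noteq> 0" "degree r \<le> m"
  shows "hf m r (z, w) = w ^ m * poly r (z / w)"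
proof -
  have "w ^ m * poly r (z / w) = (\<Sum>k\<le>m. coeff r k * (w ^ m * (z/w) ^ k))"
    unfolding poly_sum_le[OF assms(2)] sum_distrib_left by (simp add: algebra_simps)
  also have "\<dots> = (\<Sum>k\<le>m. coeff r k * z ^ k * w ^ (m - k))"
  proof (rule sum.cong)
    fix k assume "k \<in> {..m}"
    then have "w ^ m = w ^ k * w ^ (m - k)" by (simp add: power_add[symmetric])
    then show "coeff r k * (w ^ m * (z/w) ^ k) = coeff r k * z ^ k * w ^ (m - k)"
      using assms(1) by (simp add: power_divide field_simps)
  qed simp
  finally show ?thesis by (simp add: hf_def)
qed

lemma hf_add: "hf m (r + s) x = hf m r x + hf m s x"
  by (simp add: hf_def sum.distrib algebra_simps)

lemma hf_smult: "hf m (smult c r) x = c * hf m r x"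
  by (simp add: hf_def sum_distrib_left algebra_simps)

lemma hf_diff: "hf m (r - s) x = hf m r x - hf m s x"
  by (simp add: hf_def sum_subtractf algebra_simps)

lemma hf_0 [simp]: "hf m 0 x = 0"
  by (simp add: hf_def)

lemma hf_sum: "finite A \<Longrightarrow> hf m (\<Sum>i\<in>A. r i) x = (\<Sum>i\<in>A. hf m (r i) x)"
  by (induction A rule: finite_induct) (simp_all add: hf_add)

lemma coeff_mult_top: assumes "degree r \<le> m" "degree s \<le> m'"
  shows "coeff (r * s) (m + m') = coeff r m * coeff s m'"
proof (cases "degree r = m \<and> degree s = m'")
  case True
  then show ?thesis using coeff_mult_degree_sum[of r s] by simp
next
  case False
  then have "degree r < m \<or> degree s < m'" using assms by auto
  moreover have "degree (r * s) \<le> degree r + degree s" by (rule degree_mult_le)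
  ultimately have "degree (r * s) < m + m'" using assms by linarith
  then show ?thesis using False assms \<open>degree r < m \<or> degree s < m'\<close>
    by (auto simp: coeff_eq_0)
qed

lemma hf_mult: assumes "degree r \<le> m" "degree s \<le> m'"
  shows "hf (m + m') (r * s) x = hf m r x * hf m' s x"
proof (cases x)
  case (Pair z w)
  show ?thesis
  proof (cases "w = 0")
    case True
    then show ?thesis using Pair coeff_mult_top[OF assms] by (simp add: hf_w0 power_add)
  next
    case False
    have "degree (r * s) \<le> m + m'" using degree_mult_le[of r s] assms by linarith
    then show ?thesis using Pair False assms by (simp add: hf_wne power_add)
  qed
qed

lemma hf_1: "hf 1 r (z, w) = coeff r 1 * z + coeff r 0 * w"
proof -
  have "{..1::nat} = {0, 1}" by auto
  then show ?thesis unfolding hf_def by simp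
qed

lemma deg_pow_le: assumes "degree (r::complex poly) \<le> 1" shows "degree (r ^ k) \<le> k"
proof -
  have "degree (r ^ k) \<le> degree r * k" by (rule degree_power_le)
  also have "\<dots> \<le> k" using assms by simp
  finally show ?thesis .
qed

lemma hf_pow: assumes "degree r \<le> 1" shows "hf k (r ^ k) x = hf 1 r x ^ k"
proof (induction k)
  case 0
  then show ?case by (simp add: hf_def)
next
  case (Suc k)
  have "hf (1 + k) (r * r ^ k) x = hf 1 r x * hf k (r ^ k) x"
    by (rule hf_mult[OF assms deg_pow_le[OF assms]])
  also have "\<dots> = hf 1 r x ^ Suc k" by (simp only: Suc.IH power_Suc)
  finally show ?case by (simp only: power_Suc plus_1_eq_Suc)
qed

lemma deg_lin: "degree [:b, a:] \<le> 1"
  by simp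

lemma hf_subst:
  fixes P :: "complex poly" and a b c d :: complex and D :: nat
  defines "P' \<equiv> (\<Sum>k\<le>D. smult (coeff P k) ([:b,a:] ^ k * [:d,c:] ^ (D - k)))"
  shows "hf D P (a*z + b*w, c*z + d*w) = hf D P' (z, w)" and "degree P' \<le> D"
proof -
  have dp: "degree ([:b,a:] ^ k * [:d,c:] ^ (D - k)) \<le> D" if "k \<le> D" for k
  proof -
    have "degree ([:b,a:] ^ k) \<le> k" by (rule deg_pow_le[OF deg_lin])
    moreover have "degree ([:d,c:] ^ (D-k)) \<le> D - k" by (rule deg_pow_le[OF deg_lin])
    ultimately show ?thesis using degree_mult_le[of "[:b,a:] ^ k" "[:d,c:] ^ (D - k)"] that by linarith
  qed
  show "degree P' \<le> D" unfolding P'_def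
    by (rule degree_sum_le) (auto intro: order.trans[OF degree_smult_le] dp)
  have "hf D P' (z, w) = (\<Sum>k\<le>D. coeff P k * hf D ([:b,a:] ^ k * [:d,c:] ^ (D - k)) (z,w))"
    unfolding P'_def by (simp add: hf_sum hf_smult)
  also have "\<dots> = (\<Sum>k\<le>D. coeff P k * (a*z + b*w) ^ k * (c*z + d*w) ^ (D - k))"
  proof (rule sum.cong)
    fix k assume "k \<in> {..D}"
    then have kD: "k + (D - k) = D" by simp
    have dk: "degree ([:b,a:] ^ k) \<le> k" by (rule deg_pow_le[OF deg_lin])
    have dk2: "degree ([:d,c:] ^ (D-k)) \<le> D - k" by (rule deg_pow_le[OF deg_lin])
    have "hf D ([:b,a:] ^ k * [:d,c:] ^ (D - k)) (z,w) = hf k ([:b,a:] ^ k) (z,w) * hf (D-k) ([:d,c:] ^ (D-k)) (z,w)"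
      using hf_mult[OF dk dk2, of "(z,w)"] kD by simp
    also have "\<dots> = (a*z + b*w) ^ k * (c*z + d*w) ^ (D - k)"
    proof -
      have 1: "hf k ([:b,a:] ^ k) (z,w) = (a*z + b*w) ^ k"
        using hf_pow[OF deg_lin, where k=k and x="(z,w)"] by (simp only: hf_1) simp
      have 2: "hf (D-k) ([:d,c:] ^ (D-k)) (z,w) = (c*z + d*w) ^ (D-k)"
        using hf_pow[OF deg_lin, where k="D-k" and x="(z,w)"] by (simp only: hf_1) simp
      show ?thesis by (simp only: 1 2)
    qed
    finally show "coeff P k * hf D ([:b,a:] ^ k * [:d,c:] ^ (D - k)) (z,w) = coeff P k * (a*z + b*w) ^ k * (c*z + d*w) ^ (D - k)"
      by simp
  qed simp
  also have "\<dots> = hf D P (a*z + b*w, c*z + d*w)" by (simp add: hf_def)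
  finally show "hf D P (a*z + b*w, c*z + d*w) = hf D P' (z, w)" by simp
qed

definition reps :: "nat \<Rightarrow> complex poly \<Rightarrow> complex poly \<Rightarrow> (csphere \<Rightarrow> csphere) \<Rightarrow> bool" where
  "reps D P Q g \<longleftrightarrow> (\<forall>x. x \<noteq> 0 \<longrightarrow> (hf D P x, hf D Q x) \<noteq> 0 \<and> g (proj x) = proj (hf D P x, hf D Q x))"

lemma pair_ne0: "((a::complex), (b::complex)) \<noteq> 0 \<longleftrightarrow> a \<noteq> 0 \<or> b \<noteq> 0"
  by (simp add: zero_prod_def)

lemma proj_scale: "t \<noteq> 0 \<Longrightarrow> proj (t * a, t * b) = proj (a, b)"
  by (simp add: proj_def)

lemma proj_eq_iff: assumes "a \<noteq> 0" "b \<noteq> 0"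
  shows "proj a = proj b \<longleftrightarrow> crs a b = 0"
proof -
  obtain a1 a2 b1 b2 where A: "a = (a1,a2)" "b = (b1,b2)" by (cases a, cases b) auto
  show ?thesis using assms unfolding A
    by (cases "a2 = 0"; cases "b2 = 0") (auto simp: proj_def crs_def pair_ne0 field_simps)
qed

lemma coprime_no_common_root:
  fixes p q :: "complex poly"
  assumes "coprime p q" shows "poly p u \<noteq> 0 \<or> poly q u \<noteq> 0"
proof (rule ccontr)
  assume "\<not> ?thesis"
  then have "[:-u,1:] dvd p" "[:-u,1:] dvd q" by (auto simp: poly_eq_0_iff_dvd)
  then have "is_unit [:-u, 1:]" using assms coprime_common_divisor by blast
  then show False by (simp add: is_unit_iff_degree)
qed

lemma rat_reps:
  fixes p q :: "complex poly"
  assumes cp: "coprime p q" and md: "max (degree p) (degree q) = D" and D1: "D \<ge> 1"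
  shows "reps D p q (rat_eval p q)"
  unfolding reps_def
proof (intro allI impI)
  fix x :: "complex \<times> complex" assume x: "x \<noteq> 0"
  obtain z w where xz: "x = (z, w)" by (cases x)
  have dp: "degree p \<le> D" "degree q \<le> D" using md by auto
  show "(hf D p x, hf D q x) \<noteq> 0 \<and> rat_eval p q (proj x) = proj (hf D p x, hf D q x)"
  proof (cases "w = 0")
    case False
    have h: "hf D p x = w ^ D * poly p (z/w)" "hf D q x = w ^ D * poly q (z/w)"
      using hf_wne[OF False dp(1)] hf_wne[OF False dp(2)] xz by auto
    have wD: "w ^ D \<noteq> 0" using False by simp
    have "proj (hf D p x, hf D q x) = proj (poly p (z/w), poly q (z/w))"
      unfolding h by (rule proj_scale[OF wD])
    moreover have "rat_eval p q (proj x) = proj (poly p (z/w), poly q (z/w))"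
      using False xz by (simp add: rat_eval_def proj_def)
    moreover have "(hf D p x, hf D q x) \<noteq> 0"
      using coprime_no_common_root[OF cp, of "z/w"] wD unfolding h pair_ne0 by auto
    ultimately show ?thesis by simp
  next
    case True
    then have z: "z \<noteq> 0" using x xz by (auto simp: zero_prod_def)
    have h: "hf D p x = coeff p D * z ^ D" "hf D q x = coeff q D * z ^ D"
      using xz True by (auto simp: hf_w0)
    have px: "proj x = None" using True xz by (simp add: proj_def)
    have zD: "z ^ D \<noteq> 0" using z by simp
    show ?thesis
    proof (cases "degree q < degree p")
      case True
      then have "degree p = D" using md by auto
      then have "coeff p D \<noteq> 0" using D1 by (metis leading_coeff_0_iff not_one_le_zero degree_0)
      moreover have "coeff q D = 0" using True \<open>degree p = D\<close> by (simp add: coeff_eq_0)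
      ultimately show ?thesis using True h px zD by (simp add: rat_eval_def proj_def pair_ne0)
    next
      case False
      then have "degree q = D" using md by auto
      then have cq: "coeff q D \<noteq> 0" using D1 by (metis leading_coeff_0_iff not_one_le_zero degree_0)
      show ?thesis
      proof (cases "degree p = degree q")
        case True
        then show ?thesis using h px zD cq \<open>degree q = D\<close> by (simp add: rat_eval_def proj_def pair_ne0)
      next
        case False
        then have "degree p < D" using md \<open>degree q = D\<close> by auto
        then have "coeff p D = 0" by (simp add: coeff_eq_0)
        then show ?thesis using False \<open>\<not> degree q < degree p\<close> h px zD cq \<open>degree q = D\<close>
          by (simp add: rat_eval_def proj_def pair_ne0)
      qed
    qed
  qed
qed

lemma lin_ne0:
  fixes a b c d z w :: complex
  assumes "a*d - b*c \<noteq> 0" "(z, w) \<noteq> 0"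
  shows "(a*z + b*w, c*z + d*w) \<noteq> 0"
proof
  assume h: "(a*z + b*w, c*z + d*w) = 0"
  then have e1: "a*z + b*w = 0" "c*z + d*w = 0" by (auto simp: zero_prod_def)
  have "(a*d - b*c) * z = d*(a*z + b*w) - b*(c*z + d*w)" by (simp add: algebra_simps)
  then have "z = 0" using e1 assms(1) by simp
  have "(a*d - b*c) * w = a*(c*z + d*w) - c*(a*z + b*w)" by (simp add: algebra_simps)
  then have "w = 0" using e1 assms(1) by simp
  then show False using \<open>z = 0\<close> assms(2) by (simp add: zero_prod_def)
qed

lemma rational_map_reps:
  assumes "rational_map D g"
  shows "\<exists>P Q. degree P \<le> D \<and> degree Q \<le> D \<and> reps D P Q g"
proof -
  obtain p q where "coprime p q" "max (degree p) (degree q) = D" "g = rat_eval p q" "D \<ge> 1"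
    using assms unfolding rational_map_def by blast
  then show ?thesis using rat_reps by (metis max.bounded_iff order_refl)
qed

lemma moeb_lin:
  assumes "moebius \<phi>"
  shows "\<exists>a b c d. a*d - b*c \<noteq> (0::complex) \<and>
     (\<forall>z w. (z, w) \<noteq> 0 \<longrightarrow> \<phi> (proj (z, w)) = proj (a*z + b*w, c*z + d*w))"
proof -
  obtain p q where cp: "coprime p q" "max (degree p) (degree q) = 1" "\<phi> = rat_eval p q"
    using assms unfolding moebius_def rational_map_def by blast
  have r: "reps 1 p q \<phi>" using rat_reps[OF cp(1,2)] cp(3) by simp
  define a b c d where "a = coeff p 1" "b = coeff p 0" "c = coeff q 1" "d = coeff q 0"
  have L: "(a*z + b*w, c*z + d*w) \<noteq> 0 \<and> \<phi> (proj (z, w)) = proj (a*z + b*w, c*z + d*w)"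
    if zw: "(z, w) \<noteq> 0" for z w
  proof -
    have "(hf 1 p (z,w), hf 1 q (z,w)) \<noteq> 0 \<and> \<phi> (proj (z,w)) = proj (hf 1 p (z,w), hf 1 q (z,w))"
      using r zw unfolding reps_def by blast
    then show ?thesis unfolding a_b_c_d_def hf_1 .
  qed
  have "a*d - b*c \<noteq> 0"
  proof
    assume det: "a*d - b*c = 0"
    show False
    proof (cases "(d, -c) \<noteq> (0::complex\<times>complex)")
      case True
      have "(a*d + b*(-c), c*d + d*(-c)) = 0" using det by (simp add: zero_prod_def algebra_simps)
      then show False using L[OF True] by simp
    next
      case False
      then have cd: "c = 0" "d = 0" by (auto simp: zero_prod_def)
      show False
      proof (cases "(b, -a) \<noteq> (0::complex\<times>complex)")
        case True
        have "(a*b + b*(-a), c*b + d*(-a)) = 0" using cd by (simp add: zero_prod_def algebra_simps)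
        then show False using L[OF True] by simp
      next
        case False
        then have "a = 0" "b = 0" by (auto simp: zero_prod_def)
        then show False using L[of 1 0] cd by (simp add: zero_prod_def)
      qed
    qed
  qed
  then show ?thesis using L by blast
qed

lemma proj_surj: "\<exists>x. x \<noteq> 0 \<and> proj x = q"
proof (cases q)
  case None
  then show ?thesis by (intro exI[of _ "(1,0)"]) (simp add: proj_def zero_prod_def)
next
  case (Some u)
  then show ?thesis by (intro exI[of _ "(u,1)"]) (simp add: proj_def zero_prod_def)
qed

lemma moeb_inv:
  assumes "moebius \<psi>"
  shows "\<exists>a b c d. a*d - b*c \<noteq> (0::complex) \<and>
     (\<forall>z w. (z, w) \<noteq> 0 \<longrightarrow> inv \<psi> (proj (z, w)) = proj (a*z + b*w, c*z + d*w))"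
proof -
  obtain A B C E where det: "A*E - B*C \<noteq> (0::complex)" and
    L: "\<And>z w. (z, w) \<noteq> 0 \<Longrightarrow> \<psi> (proj (z, w)) = proj (A*z + B*w, C*z + E*w)"
    using moeb_lin[OF assms] by blast
  have inj: "inj \<psi>"
  proof (rule injI)
    fix q1 q2 assume e: "\<psi> q1 = \<psi> q2"
    obtain x1 where x1: "x1 \<noteq> 0" "proj x1 = q1" using proj_surj by blast
    obtain x2 where x2: "x2 \<noteq> 0" "proj x2 = q2" using proj_surj by blast
    obtain z1 w1 z2 w2 where X: "x1 = (z1, w1)" "x2 = (z2, w2)" by (cases x1, cases x2)
    have n1: "(A*z1 + B*w1, C*z1 + E*w1) \<noteq> 0" using lin_ne0[OF det] x1 X by simp
    have n2: "(A*z2 + B*w2, C*z2 + E*w2) \<noteq> 0" using lin_ne0[OF det] x2 X by simp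
    have q1: "\<psi> q1 = proj (A*z1 + B*w1, C*z1 + E*w1)" using L[of z1 w1] x1 X by simp
    have q2: "\<psi> q2 = proj (A*z2 + B*w2, C*z2 + E*w2)" using L[of z2 w2] x2 X by simp
    have "proj (A*z1 + B*w1, C*z1 + E*w1) = proj (A*z2 + B*w2, C*z2 + E*w2)"
      using e q1 q2 by simp
    then have "crs (A*z1 + B*w1, C*z1 + E*w1) (A*z2 + B*w2, C*z2 + E*w2) = 0"
      using proj_eq_iff[OF n1 n2] by simp
    moreover have "crs (A*z1 + B*w1, C*z1 + E*w1) (A*z2 + B*w2, C*z2 + E*w2) = (A*E - B*C) * crs x1 x2"
      unfolding X crs_def by (simp add: algebra_simps)
    ultimately have "crs x1 x2 = 0" using det by simp
    then show "q1 = q2" using proj_eq_iff[OF x1(1) x2(1)] x1 x2 by simp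
  qed
  have "inv \<psi> (proj (z, w)) = proj (E*z + (-B)*w, (-C)*z + A*w)" if zw: "(z, w) \<noteq> 0" for z w
  proof -
    have det2: "E*A - (-B)*(-C) \<noteq> 0" using det by (simp add: algebra_simps)
    have ne: "(E*z + (-B)*w, (-C)*z + A*w) \<noteq> 0" using lin_ne0[OF det2 zw] .
    have "\<psi> (proj (E*z + (-B)*w, (-C)*z + A*w)) =
        proj (A*(E*z + (-B)*w) + B*((-C)*z + A*w), C*(E*z + (-B)*w) + E*((-C)*z + A*w))"
      by (rule L[OF ne])
    also have "\<dots> = proj ((A*E - B*C) * z, (A*E - B*C) * w)"
      by (simp add: algebra_simps)
    also have "\<dots> = proj (z, w)" by (rule proj_scale[OF det])
    finally have eq: "\<psi> (proj (E*z + (-B)*w, (-C)*z + A*w)) = proj (z, w)" .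
    have "inv \<psi> (\<psi> (proj (E*z + (-B)*w, (-C)*z + A*w))) = proj (E*z + (-B)*w, (-C)*z + A*w)"
      by (rule inv_f_f[OF inj])
    then show ?thesis unfolding eq .
  qed
  moreover have "E*A - (-B)*(-C) \<noteq> 0" using det by (simp add: algebra_simps)
  ultimately show ?thesis by blast
qed

lemma reps_comp:
  assumes r: "reps D P Q g" and m1: "moebius \<phi>" and m2: "moebius \<psi>"
  shows "\<exists>P' Q'. degree P' \<le> D \<and> degree Q' \<le> D \<and> reps D P' Q' (\<phi> \<circ> g \<circ> inv \<psi>)"
proof -
  obtain \<alpha> \<beta> \<gamma> \<delta> where det1: "\<alpha>*\<delta> - \<beta>*\<gamma> \<noteq> (0::complex)" and
    L1: "\<And>z w. (z, w) \<noteq> 0 \<Longrightarrow> \<phi> (proj (z, w)) = proj (\<alpha>*z + \<beta>*w, \<gamma>*z + \<delta>*w)"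
    using moeb_lin[OF m1] by blast
  obtain a b c d where det2: "a*d - b*c \<noteq> (0::complex)" and
    L2: "\<And>z w. (z, w) \<noteq> 0 \<Longrightarrow> inv \<psi> (proj (z, w)) = proj (a*z + b*w, c*z + d*w)"
    using moeb_inv[OF m2] by blast
  define P1 where "P1 = (\<Sum>k\<le>D. smult (coeff P k) ([:b,a:] ^ k * [:d,c:] ^ (D - k)))"
  define Q1 where "Q1 = (\<Sum>k\<le>D. smult (coeff Q k) ([:b,a:] ^ k * [:d,c:] ^ (D - k)))"
  have sP: "\<And>z w. hf D P (a*z + b*w, c*z + d*w) = hf D P1 (z, w)" and dP: "degree P1 \<le> D"
    using hf_subst[where P=P and a=a and b=b and c=c and d=d and D=D] unfolding P1_def by auto
  have sQ: "\<And>z w. hf D Q (a*z + b*w, c*z + d*w) = hf D Q1 (z, w)" and dQ: "degree Q1 \<le> D"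
    using hf_subst[where P=Q and a=a and b=b and c=c and d=d and D=D] unfolding Q1_def by auto
  define P' where "P' = smult \<alpha> P1 + smult \<beta> Q1"
  define Q' where "Q' = smult \<gamma> P1 + smult \<delta> Q1"
  have dP': "degree P' \<le> D" unfolding P'_def
    using dP dQ by (meson degree_add_le degree_smult_le order.trans)
  have dQ': "degree Q' \<le> D" unfolding Q'_def
    using dP dQ by (meson degree_add_le degree_smult_le order.trans)
  have "reps D P' Q' (\<phi> \<circ> g \<circ> inv \<psi>)"
    unfolding reps_def
  proof (intro allI impI)
    fix y :: "complex \<times> complex" assume y: "y \<noteq> 0"
    obtain z w where yz: "y = (z, w)" by (cases y)
    have My: "(a*z + b*w, c*z + d*w) \<noteq> 0" using lin_ne0[OF det2] y yz by simp
    have g0: "(hf D P (a*z + b*w, c*z + d*w), hf D Q (a*z + b*w, c*z + d*w)) \<noteq> 0 \<and>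
       g (proj (a*z + b*w, c*z + d*w)) = proj (hf D P (a*z + b*w, c*z + d*w), hf D Q (a*z + b*w, c*z + d*w))"
      using r My unfolding reps_def by blast
    have g1: "(hf D P1 (z,w), hf D Q1 (z,w)) \<noteq> 0"
      and g2: "g (proj (a*z + b*w, c*z + d*w)) = proj (hf D P1 (z,w), hf D Q1 (z,w))"
      using g0 unfolding sP sQ by auto
    have ne: "(hf D P' y, hf D Q' y) \<noteq> 0"
      using lin_ne0[OF det1, of "hf D P1 (z,w)" "hf D Q1 (z,w)"] g1 yz
      by (simp add: P'_def Q'_def hf_add hf_smult)
    have "(\<phi> \<circ> g \<circ> inv \<psi>) (proj y) = \<phi> (proj (hf D P1 (z,w), hf D Q1 (z,w)))"
      using L2[of z w] y yz g2 by simp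
    also have "\<dots> = proj (hf D P' y, hf D Q' y)"
      using L1[OF g1] yz by (simp add: P'_def Q'_def hf_add hf_smult)
    finally show "(hf D P' y, hf D Q' y) \<noteq> 0 \<and> (\<phi> \<circ> g \<circ> inv \<psi>) (proj y) = proj (hf D P' y, hf D Q' y)"
      using ne by simp
  qed
  then show ?thesis using dP' dQ' by blast
qed

definition nsum :: "nat \<Rightarrow> complex poly \<Rightarrow> complex poly \<Rightarrow> real" where
  "nsum D P Q = (\<Sum>k\<le>D. cmod (coeff P k) + cmod (coeff Q k))"

lemma poly_zero_if_coeffs: "degree P \<le> D \<Longrightarrow> (\<forall>k\<le>D. coeff P k = 0) \<Longrightarrow> P = 0"
  by (metis coeff_eq_0 leading_coeff_0_iff le_less_linear)

lemma reps_normalize: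
  assumes r: "reps D P Q g" and d: "degree P \<le> D" "degree Q \<le> D"
  shows "\<exists>P' Q'. degree P' \<le> D \<and> degree Q' \<le> D \<and> reps D P' Q' g \<and> nsum D P' Q' = 1"
proof -
  have N0: "nsum D P Q \<ge> 0" unfolding nsum_def by (intro sum_nonneg) auto
  have "nsum D P Q \<noteq> 0"
  proof
    assume "nsum D P Q = 0"
    then have "\<forall>k\<in>{..D}. cmod (coeff P k) + cmod (coeff Q k) = 0"
      unfolding nsum_def by (subst (asm) sum_nonneg_eq_0_iff) auto
    then have "\<forall>k\<le>D. coeff P k = 0" "\<forall>k\<le>D. coeff Q k = 0"
      by (auto simp: add_nonneg_eq_0_iff)
    then have "P = 0" "Q = 0" using poly_zero_if_coeffs d by auto
    then show False using r unfolding reps_def by (auto simp: zero_prod_def)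
  qed
  then have Np: "nsum D P Q > 0" using N0 by simp
  define t where "t = complex_of_real (1 / nsum D P Q)"
  have t0: "t \<noteq> 0" using Np by (simp add: t_def)
  have "reps D (smult t P) (smult t Q) g"
    unfolding reps_def
  proof (intro allI impI)
    fix x :: "complex\<times>complex" assume x: "x \<noteq> 0"
    then show "(hf D (smult t P) x, hf D (smult t Q) x) \<noteq> 0 \<and>
          g (proj x) = proj (hf D (smult t P) x, hf D (smult t Q) x)"
    proof -
      have "(hf D P x, hf D Q x) \<noteq> 0" "g (proj x) = proj (hf D P x, hf D Q x)"
        using r x unfolding reps_def by blast+
      then show ?thesis using t0 unfolding hf_smult by (auto simp: proj_scale pair_ne0)
    qed
  qed
  moreover have "nsum D (smult t P) (smult t Q) = 1"
  proof -
    define N where "N = nsum D P Q"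
    have Npos: "N > 0" using Np N_def by simp
    have nt: "cmod t = 1 / N" using Npos by (simp add: t_def N_def norm_divide)
    have "nsum D (smult t P) (smult t Q) = (\<Sum>k\<le>D. (1/N) * (cmod (coeff P k) + cmod (coeff Q k)))"
      unfolding nsum_def by (simp add: norm_mult nt algebra_simps)
    also have "\<dots> = (1 / nsum D P Q) * nsum D P Q"
      unfolding sum_distrib_left[symmetric] N_def by (simp add: nsum_def)
    finally have "nsum D (smult t P) (smult t Q) = (1 / nsum D P Q) * nsum D P Q" .
    then show ?thesis using Np by simp
  qed
  moreover have "degree (smult t P) \<le> D" "degree (smult t Q) \<le> D"
    using d by (auto intro: order.trans[OF degree_smult_le])
  ultimately show ?thesis by blast
qed

lemma nsum_coeff_le: "nsum D P Q = 1 \<Longrightarrow> degree P \<le> D \<Longrightarrow> degree Q \<le> D \<Longrightarrow>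
    cmod (coeff P k) \<le> 1 \<and> cmod (coeff Q k) \<le> 1"
proof (cases "k \<le> D")
  case True
  assume N: "nsum D P Q = 1"
  have "cmod (coeff P k) + cmod (coeff Q k) \<le> nsum D P Q"
    unfolding nsum_def using True
    by (intro member_le_sum[of k "{..D}" "\<lambda>k. cmod (coeff P k) + cmod (coeff Q k)"]) auto
  then show ?thesis using N by (smt (verit) norm_ge_zero)
next
  case False
  assume "degree P \<le> D" "degree Q \<le> D"
  then show ?thesis using False by (simp add: coeff_eq_0)
qed

lemma bw_multi:
  fixes a :: "nat \<Rightarrow> nat \<Rightarrow> complex"
  assumes B: "\<And>n k. cmod (a n k) \<le> B"
  shows "\<exists>r. strict_mono r \<and> (\<forall>k<N. convergent (\<lambda>j. a (r j) k))"
proof (induction N)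
  case 0
  then show ?case by (intro exI[of _ id]) (auto simp: strict_mono_def)
next
  case (Suc N)
  then obtain r where r: "strict_mono r" "\<forall>k<N. convergent (\<lambda>j. a (r j) k)" by blast
  have "bounded (range (\<lambda>j. a (r j) N))"
    using B by (auto simp: bounded_iff)
  then obtain l r' where r': "strict_mono r'" "((\<lambda>j. a (r j) N) \<circ> r') \<longlonglongrightarrow> l"
    using bounded_imp_convergent_subsequence by blast
  have "strict_mono (r \<circ> r')" using r(1) r'(1) by (rule strict_mono_o)
  moreover have "\<forall>k<Suc N. convergent (\<lambda>j. a ((r \<circ> r') j) k)"
  proof (intro allI impI)
    fix k assume k: "k < Suc N"
    show "convergent (\<lambda>j. a ((r \<circ> r') j) k)"
    proof (cases "k < N")
      case True
      then show ?thesis using convergent_subseq_convergent[OF r(2)[rule_format, OF True] r'(1)]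
        by (simp add: o_def)
    next
      case False
      then have "k = N" using k by simp
      then show ?thesis using r'(2) by (auto simp: convergent_def o_def)
    qed
  qed
  ultimately show ?case by blast
qed

lemma nfst: "cmod (fst (u::complex\<times>complex)) \<le> norm u"
  by (cases u) (metis fst_conv norm_fst_le)

lemma nsnd: "cmod (snd (u::complex\<times>complex)) \<le> norm u"
  by (cases u) (metis snd_conv norm_snd_le)

lemma hf_unif_bound:
  assumes "norm x \<le> 1"
  shows "cmod (hf D A x - hf D B x) \<le> (\<Sum>k\<le>D. cmod (coeff A k - coeff B k))"
proof -
  have f: "cmod (fst x) \<le> 1" "cmod (snd x) \<le> 1"
    using assms nfst[of x] nsnd[of x] by auto
  have "hf D A x - hf D B x = hf D (A - B) x" by (simp add: hf_diff)
  also have "cmod \<dots> \<le> (\<Sum>k\<le>D. cmod (coeff (A - B) k * fst x ^ k * snd x ^ (D - k)))"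
    unfolding hf_def by (rule norm_sum)
  also have "\<dots> \<le> (\<Sum>k\<le>D. cmod (coeff A k - coeff B k))"
  proof (rule sum_mono)
    fix k
    have "cmod (fst x ^ k) \<le> 1" "cmod (snd x ^ (D-k)) \<le> 1"
      using f by (auto simp: norm_power power_le_one)
    then have "cmod (fst x ^ k) * cmod (snd x ^ (D-k)) \<le> 1"
      by (simp add: mult_le_one)
    then show "cmod (coeff (A - B) k * fst x ^ k * snd x ^ (D - k)) \<le> cmod (coeff A k - coeff B k)"
      by (simp add: norm_mult mult.assoc mult_left_le)
  qed
  finally show ?thesis .
qed

lemma crs_diff: "crs u v - crs w v = crs (u - w) v"
  by (simp add: crs_def algebra_simps)

lemma crs_bound: "cmod (crs u v) \<le> 2 * norm u * norm v"
proof -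
  have "cmod (crs u v) \<le> cmod (fst u) * cmod (snd v) + cmod (snd u) * cmod (fst v)"
    unfolding crs_def by (metis norm_mult norm_triangle_ineq4)
  also have "\<dots> \<le> norm u * norm v + norm u * norm v"
    by (intro add_mono mult_mono nfst nsnd) auto
  finally show ?thesis by simp
qed

lemma unit_rep: "\<exists>x::complex\<times>complex. norm x = 1 \<and> proj x = y"
proof -
  obtain x where x: "x \<noteq> 0" "proj x = y" using proj_surj by blast
  define t where "t = 1 / norm x"
  have "norm (t *\<^sub>R x) = 1" using x by (simp add: t_def)
  moreover have "proj (t *\<^sub>R x) = proj x"
  proof -
    have t0: "complex_of_real t \<noteq> 0" using x by (simp add: t_def)
    have "t *\<^sub>R x = (complex_of_real t * fst x, complex_of_real t * snd x)"
      by (cases x) (simp add: scaleR_conv_of_real)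
    then show ?thesis using proj_scale[OF t0, of "fst x" "snd x"] by simp
  qed
  ultimately show ?thesis using x by blast
qed

lemma coeff_monom_sum: "coeff (\<Sum>k\<le>D. monom (c k) k) i = (if i \<le> D then c i else 0)"
  by (simp add: coeff_sum coeff_monom)

lemma degree_monom_sum: "degree (\<Sum>k\<le>D. monom (c k) k) \<le> D"
  by (rule degree_sum_le) (auto intro: order.trans[OF degree_monom_le])

lemma sdist_self [simp]: "sdist x x = 0"
  by (cases x) auto

lemma sdist_nonneg: "sdist x y \<ge> 0"
  by (cases x; cases y) auto

lemma hf_at1: "degree A \<le> D \<Longrightarrow> hf D A (z, 1) = poly A z"
  using hf_wne[of 1 A D z] by simp

lemma limit_polys:
  fixes P Q :: "nat \<Rightarrow> complex poly"
  assumes dP: "\<And>n. degree (P n) \<le> D" and dQ: "\<And>n. degree (Q n) \<le> D"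
    and N1: "\<And>n. nsum D (P n) (Q n) = 1"
  shows "\<exists>r PL QL. strict_mono r \<and> degree PL \<le> D \<and> degree QL \<le> D \<and>
     (\<forall>k. (\<lambda>j. coeff (P (r j)) k) \<longlonglongrightarrow> coeff PL k) \<and>
     (\<forall>k. (\<lambda>j. coeff (Q (r j)) k) \<longlonglongrightarrow> coeff QL k)"
proof -
  have BP: "cmod (coeff (P n) k) \<le> 1" for n k
    using nsum_coeff_le[OF N1 dP dQ] by blast
  have BQ: "cmod (coeff (Q n) k) \<le> 1" for n k
    using nsum_coeff_le[OF N1 dP dQ] by blast
  obtain r1 where r1: "strict_mono r1" "\<forall>k<Suc D. convergent (\<lambda>j. coeff (P (r1 j)) k)"
    using bw_multi[of "\<lambda>n k. coeff (P n) k", OF BP] by blast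
  obtain r2 where r2: "strict_mono r2" "\<forall>k<Suc D. convergent (\<lambda>j. coeff (Q (r1 (r2 j))) k)"
    using bw_multi[of "\<lambda>n k. coeff (Q (r1 n)) k", OF BQ] by blast
  define r where "r = r1 \<circ> r2"
  have rm: "strict_mono r" unfolding r_def using r1(1) r2(1) by (rule strict_mono_o)
  have cP1: "convergent (\<lambda>j. coeff (P (r j)) k)" if "k \<le> D" for k
  proof -
    have "convergent ((\<lambda>j. coeff (P (r1 j)) k) \<circ> r2)"
      using convergent_subseq_convergent[OF r1(2)[rule_format] r2(1)] that by simp
    then show ?thesis by (simp add: r_def o_def)
  qed
  have cQ1: "convergent (\<lambda>j. coeff (Q (r j)) k)" if "k \<le> D" for k
    using r2(2) that by (simp add: r_def o_def)
  define cP where "cP k = lim (\<lambda>j. coeff (P (r j)) k)" for k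
  define cQ where "cQ k = lim (\<lambda>j. coeff (Q (r j)) k)" for k
  define PL where "PL = (\<Sum>k\<le>D. monom (cP k) k)"
  define QL where "QL = (\<Sum>k\<le>D. monom (cQ k) k)"
  have cvP: "(\<lambda>j. coeff (P (r j)) k) \<longlonglongrightarrow> coeff PL k" for k
  proof (cases "k \<le> D")
    case True
    have "convergent (\<lambda>j. coeff (P (r j)) k)" using cP1 True by simp
    then have "(\<lambda>j. coeff (P (r j)) k) \<longlonglongrightarrow> cP k" unfolding cP_def by (rule convergent_LIMSEQ_iff[THEN iffD1])
    moreover have "coeff PL k = cP k" unfolding PL_def coeff_monom_sum using True by simp
    ultimately show ?thesis by simp
  next
    case False
    then have "coeff (P (r j)) k = 0" for j using dP[of "r j"] by (simp add: coeff_eq_0)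
    then show ?thesis unfolding PL_def coeff_monom_sum using False by simp
  qed
  have cvQ: "(\<lambda>j. coeff (Q (r j)) k) \<longlonglongrightarrow> coeff QL k" for k
  proof (cases "k \<le> D")
    case True
    have "convergent (\<lambda>j. coeff (Q (r j)) k)" using cQ1 True by simp
    then have "(\<lambda>j. coeff (Q (r j)) k) \<longlonglongrightarrow> cQ k" unfolding cQ_def by (rule convergent_LIMSEQ_iff[THEN iffD1])
    moreover have "coeff QL k = cQ k" unfolding QL_def coeff_monom_sum using True by simp
    ultimately show ?thesis by simp
  next
    case False
    then have "coeff (Q (r j)) k = 0" for j using dQ[of "r j"] by (simp add: coeff_eq_0)
    then show ?thesis unfolding QL_def coeff_monom_sum using False by simp
  qed
  have dPL: "degree PL \<le> D" unfolding PL_def by (rule degree_monom_sum)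
  have dQL: "degree QL \<le> D" unfolding QL_def by (rule degree_monom_sum)
  have "\<forall>k. (\<lambda>j. coeff (P (r j)) k) \<longlonglongrightarrow> coeff PL k" using cvP by blast
  moreover have "\<forall>k. (\<lambda>j. coeff (Q (r j)) k) \<longlonglongrightarrow> coeff QL k" using cvQ by blast
  ultimately show ?thesis using rm dPL dQL by blast
qed

lemma core:
  fixes h :: "nat \<Rightarrow> csphere \<Rightarrow> csphere" and P Q :: "nat \<Rightarrow> complex poly" and p q :: "complex poly"
  assumes R: "\<And>n. reps D (P n) (Q n) (h n)" and dP: "\<And>n. degree (P n) \<le> D"
    and dQ: "\<And>n. degree (Q n) \<le> D" and N1: "\<And>n. nsum D (P n) (Q n) = 1"
    and cp: "coprime p q" and md: "max (degree p) (degree q) = D" and D1: "D \<ge> 1"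
    and fin: "finite X"
    and pw: "\<And>z. Some z \<notin> X \<Longrightarrow> (\<lambda>n. sdist (h n (Some z)) (rat_eval p q (Some z))) \<longlonglongrightarrow> 0"
  shows "\<exists>r. strict_mono r \<and> (\<forall>\<epsilon>>0. eventually (\<lambda>j. \<forall>y. sdist (h (r j) y) (rat_eval p q y) < \<epsilon>) sequentially)"
proof -
  obtain r PL QL where r: "strict_mono r" and dPL: "degree PL \<le> D" and dQL: "degree QL \<le> D"
    and cvP: "\<forall>k. (\<lambda>j. coeff (P (r j)) k) \<longlonglongrightarrow> coeff PL k"
    and cvQ: "\<forall>k. (\<lambda>j. coeff (Q (r j)) k) \<longlonglongrightarrow> coeff QL k"
  proof -
    have "\<exists>r PL QL. strict_mono r \<and> degree PL \<le> D \<and> degree QL \<le> D \<and>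
     (\<forall>k. (\<lambda>j. coeff (P (r j)) k) \<longlonglongrightarrow> coeff PL k) \<and>
     (\<forall>k. (\<lambda>j. coeff (Q (r j)) k) \<longlonglongrightarrow> coeff QL k)"
      by (rule limit_polys[where P=P and Q=Q and D=D]) (rule dP, rule dQ, rule N1)
    then show ?thesis using that by blast
  qed
  have cvP': "(\<lambda>j. coeff (P (r j)) k) \<longlonglongrightarrow> coeff PL k" for k using cvP by blast
  have cvQ': "(\<lambda>j. coeff (Q (r j)) k) \<longlonglongrightarrow> coeff QL k" for k using cvQ by blast
  have hfP: "(\<lambda>j. hf D (P (r j)) x) \<longlonglongrightarrow> hf D PL x" for x
    unfolding hf_def by (intro tendsto_intros cvP')
  have hfQ: "(\<lambda>j. hf D (Q (r j)) x) \<longlonglongrightarrow> hf D QL x" for x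
    unfolding hf_def by (intro tendsto_intros cvQ')
  have NL: "nsum D PL QL = 1"
  proof -
    have "(\<lambda>j. nsum D (P (r j)) (Q (r j))) \<longlonglongrightarrow> nsum D PL QL"
      unfolding nsum_def by (intro tendsto_intros cvP' cvQ')
    then show ?thesis using N1 by (simp add: LIMSEQ_const_iff)
  qed
  have PQ0: "PL \<noteq> 0 \<or> QL \<noteq> 0"
    using NL by (auto simp: nsum_def)
  have dp: "degree p \<le> D" "degree q \<le> D" using md by auto
  have B: "(hf D p x, hf D q x) \<noteq> 0 \<and> rat_eval p q (proj x) = proj (hf D p x, hf D q x)" if "x \<noteq> 0" for x
    using rat_reps[OF cp md D1] that unfolding reps_def by blast
  have Aj: "(hf D (P n) x, hf D (Q n) x) \<noteq> 0 \<and> h n (proj x) = proj (hf D (P n) x, hf D (Q n) x)"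
    if "x \<noteq> 0" for x n
    using R[of n] that unfolding reps_def by blast
  have key: "poly PL z * poly q z - poly QL z * poly p z = 0"
    if z1: "Some z \<notin> X" and z2: "poly PL z \<noteq> 0 \<or> poly QL z \<noteq> 0" for z
  proof -
    define x where "x = (z, 1::complex)"
    have x0: "x \<noteq> 0" by (simp add: x_def zero_prod_def)
    define aj where "aj j = (hf D (P (r j)) x, hf D (Q (r j)) x)" for j
    define a where "a = (hf D PL x, hf D QL x)"
    define b where "b = (hf D p x, hf D q x)"
    have a_eq: "a = (poly PL z, poly QL z)" unfolding a_def x_def
      using hf_at1[OF dPL] hf_at1[OF dQL] by simp
    have b_eq: "b = (poly p z, poly q z)" unfolding b_def x_def
      using hf_at1[OF dp(1)] hf_at1[OF dp(2)] by simp
    have a0: "a \<noteq> 0" using z2 a_eq by (simp add: pair_ne0)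
    have aj0: "aj j \<noteq> 0" for j using Aj[OF x0] aj_def by simp
    have b0: "b \<noteq> 0" using B[OF x0] b_def by simp
    have px: "proj x = Some z" by (simp add: proj_def x_def)
    have sd: "(\<lambda>j. sdist (proj (aj j)) (proj b)) \<longlonglongrightarrow> 0"
    proof -
      have "((\<lambda>n. sdist (h n (Some z)) (rat_eval p q (Some z))) \<circ> r) \<longlonglongrightarrow> 0"
        using LIMSEQ_subseq_LIMSEQ[OF pw[OF z1] r] .
      moreover have "h (r j) (Some z) = proj (aj j)" for j
        using Aj[OF x0, of "r j"] px aj_def by simp
      moreover have "rat_eval p q (Some z) = proj b" using B[OF x0] px b_def by simp
      ultimately show ?thesis by (simp add: o_def)
    qed
    have ajc: "aj \<longlonglongrightarrow> a" unfolding aj_def a_def by (intro tendsto_Pair hfP hfQ)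
    have c1: "(\<lambda>j. cmod (crs (aj j) b)) \<longlonglongrightarrow> 0"
    proof -
      have e: "cmod (crs (aj j) b) = sdist (proj (aj j)) (proj b) * (norm (aj j) * norm b) / 2" for j
        using sdist_proj[OF aj0 b0] aj0 b0 by (simp add: field_simps)
      have "(\<lambda>j. sdist (proj (aj j)) (proj b) * (norm (aj j) * norm b) / 2) \<longlonglongrightarrow> 0 * (norm a * norm b) / 2"
        by (intro tendsto_intros sd ajc) auto
      then show ?thesis unfolding e by simp
    qed
    have c2: "(\<lambda>j. cmod (crs (aj j) b)) \<longlonglongrightarrow> cmod (crs a b)"
      unfolding crs_def by (intro tendsto_intros tendsto_fst[OF ajc] tendsto_snd[OF ajc])
    have "cmod (crs a b) = 0" using LIMSEQ_unique[OF c2 c1] .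
    then show ?thesis using a_eq b_eq by (simp add: crs_def)
  qed
  define S where "S = {z. Some z \<in> X} \<union> {z. poly PL z = 0 \<and> poly QL z = 0}"
  have Sfin: "finite S"
  proof -
    have "{z. Some z \<in> X} \<subseteq> the ` X" by force
    then have f1: "finite {z. Some z \<in> X}" using fin finite_subset by blast
    have f2: "finite {z. poly PL z = 0 \<and> poly QL z = 0}"
    proof (cases "PL = 0")
      case False
      have "{z. poly PL z = 0 \<and> poly QL z = 0} \<subseteq> {x. poly PL x = 0}" by auto
      then show ?thesis using poly_roots_finite[OF False] by (rule finite_subset)
    next
      case True
      then have "QL \<noteq> 0" using PQ0 by simp
      have "{z. poly PL z = 0 \<and> poly QL z = 0} \<subseteq> {x. poly QL x = 0}" by auto
      then show ?thesis using poly_roots_finite[OF \<open>QL \<noteq> 0\<close>] by (rule finite_subset)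
    qed
    show ?thesis unfolding S_def using f1 f2 by simp
  qed
  have polyeq: "PL * q = QL * p"
  proof -
    have sub: "- S \<subseteq> {z. poly (PL * q - QL * p) z = 0}"
      using key unfolding S_def by auto
    have "infinite (UNIV - S)" using Diff_infinite_finite[OF Sfin infinite_UNIV_char_0] .
    then have "infinite {z. poly (PL * q - QL * p) z = 0}"
      using sub by (metis Compl_eq_Diff_UNIV infinite_super)
    then have "PL * q - QL * p = 0" using poly_roots_finite by blast
    then show ?thesis by simp
  qed
  have p0: "p \<noteq> 0"
  proof
    assume "p = 0"
    then have "is_unit q" using cp by simp
    then have "degree q = 0" using is_unit_iff_degree[of q] by (cases "q = 0") auto
    then show False using md D1 \<open>p = 0\<close> by simp
  qed
  have q0: "q \<noteq> 0"
  proof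
    assume "q = 0"
    then have "is_unit p" using cp by simp
    then have "degree p = 0" using is_unit_iff_degree[of p] by (cases "p = 0") auto
    then show False using md D1 \<open>q = 0\<close> by simp
  qed
  have "p dvd PL * q" using polyeq by simp
  then have "p dvd PL" using cp by (simp add: coprime_dvd_mult_left_iff)
  then obtain k where k: "PL = p * k" by (elim dvdE)
  have "p * (q * k) = p * QL" using polyeq k by (simp add: algebra_simps)
  then have QLk: "QL = q * k" using p0 by simp
  have k0: "k \<noteq> 0" using PQ0 k QLk by auto
  have "degree k = 0"
  proof -
    have "degree p + degree k \<le> D" using dPL k degree_mult_eq[OF p0 k0] by simp
    moreover have "degree q + degree k \<le> D" using dQL QLk degree_mult_eq[OF q0 k0] by simp
    ultimately show ?thesis using md by linarith
  qed
  then have kc: "k = [:coeff k 0:]" using degree_0_id by metis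
  define c where "c = coeff k 0"
  have c0: "c \<noteq> 0" using k0 kc c_def by (metis pCons_0_0)
  have PLc: "PL = smult c p" using k kc c_def by (metis mult.commute smult_pCons mult_1 smult_0_right mult_smult_left pCons_0_0 one_pCons)
  have QLc: "QL = smult c q" using QLk kc c_def by (metis mult.commute smult_pCons mult_1 smult_0_right mult_smult_left pCons_0_0 one_pCons)
  have Ax: "hf D PL x = c * hf D p x" "hf D QL x = c * hf D q x" for x
    unfolding PLc QLc hf_smult by simp_all
  define Fm where "Fm x = norm (hf D PL x, hf D QL x)" for x
  have cont: "continuous_on (sphere 0 1) Fm" unfolding Fm_def hf_def by (intro continuous_intros)
  have ne: "sphere (0::complex\<times>complex) 1 \<noteq> {}"
  proof -
    have "(1, 0) \<in> sphere (0::complex\<times>complex) 1" by (simp add: norm_Pair)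
    then show ?thesis by blast
  qed
  obtain x0 where x0: "x0 \<in> sphere 0 1" "\<forall>y\<in>sphere 0 1. Fm x0 \<le> Fm y"
    using continuous_attains_inf[OF compact_sphere ne cont] by blast
  define m where "m = Fm x0"
  have mpos: "m > 0"
  proof -
    have "x0 \<noteq> 0" using x0(1) by auto
    then have "(hf D p x0, hf D q x0) \<noteq> 0" using B by blast
    then have "(hf D PL x0, hf D QL x0) \<noteq> 0" using c0 by (simp add: Ax pair_ne0)
    then show ?thesis unfolding m_def Fm_def by simp
  qed
  define e where "e j = (\<Sum>k\<le>D. cmod (coeff (P (r j)) k - coeff PL k)) +
      (\<Sum>k\<le>D. cmod (coeff (Q (r j)) k - coeff QL k))" for j
  have e0: "e \<longlonglongrightarrow> 0"
  proof -
    have "(\<lambda>j. e j) \<longlonglongrightarrow> (\<Sum>k\<le>D. cmod (coeff PL k - coeff PL k)) + (\<Sum>k\<le>D. cmod (coeff QL k - coeff QL k))"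
      unfolding e_def by (intro tendsto_intros cvP' cvQ')
    then show ?thesis by simp
  qed
  show ?thesis
  proof (intro exI conjI allI impI)
    show "strict_mono r" by (rule r)
    fix \<epsilon> :: real assume eps: "\<epsilon> > 0"
    have "min (m/2) (\<epsilon>*m/16) > 0" using eps mpos by simp
    then have ev: "eventually (\<lambda>j. e j < min (m/2) (\<epsilon>*m/16)) sequentially"
      using order_tendstoD(2)[OF e0] by blast
    show "eventually (\<lambda>j. \<forall>y. sdist (h (r j) y) (rat_eval p q y) < \<epsilon>) sequentially"
      using ev
    proof (rule eventually_mono)
      fix j assume ej: "e j < min (m/2) (\<epsilon>*m/16)"
      show "\<forall>y. sdist (h (r j) y) (rat_eval p q y) < \<epsilon>"
      proof
        fix y
        obtain x where x: "norm x = 1" "proj x = y" using unit_rep by blast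
        have xn0: "x \<noteq> 0" using x by auto
        define a where "a = (hf D (P (r j)) x, hf D (Q (r j)) x)"
        define A where "A = (hf D PL x, hf D QL x)"
        define b where "b = (hf D p x, hf D q x)"
        have a0: "a \<noteq> 0" and ha: "h (r j) y = proj a" using Aj[OF xn0, of "r j"] x a_def by auto
        have b0: "b \<noteq> 0" and hb: "rat_eval p q y = proj b" using B[OF xn0] x b_def by auto
        have "crs A b = 0" unfolding A_def b_def crs_def Ax by (simp add: algebra_simps)
        then have cab: "crs a b = crs (a - A) b" using crs_diff[of a b A] by simp
        have nd: "norm (a - A) \<le> e j"
        proof -
          have "norm (a - A) \<le> cmod (hf D (P (r j)) x - hf D PL x) + cmod (hf D (Q (r j)) x - hf D QL x)"
            unfolding a_def A_def by (simp add: norm_Pair_le)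
          also have "\<dots> \<le> e j" unfolding e_def
            by (intro add_mono hf_unif_bound) (simp_all add: x)
          finally show ?thesis .
        qed
        have ej0: "0 \<le> e j" using nd norm_ge_zero[of "a - A"] by linarith
        have mA: "m \<le> norm A" using x0(2) x unfolding m_def Fm_def A_def by auto
        have na: "norm a \<ge> m/2"
          using norm_triangle_sub[of A a] nd mA ej by (simp add: norm_minus_commute)
        have napos: "norm a > 0" using a0 by simp
        have nbpos: "norm b > 0" using b0 by simp
        have "sdist (h (r j) y) (rat_eval p q y) = 2 * cmod (crs (a - A) b) / (norm a * norm b)"
          unfolding ha hb sdist_proj[OF a0 b0] cab ..
        also have "\<dots> \<le> 2 * (2 * norm (a - A) * norm b) / (norm a * norm b)"
          by (intro divide_right_mono mult_left_mono crs_bound) (use napos nbpos in auto)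
        also have "\<dots> = 4 * norm (a - A) / norm a" using nbpos by (simp add: field_simps)
        also have "\<dots> \<le> 4 * e j / (m/2)"
          using nd na napos mpos ej0 by (intro frac_le) auto
        also have "\<dots> < \<epsilon>"
        proof -
          have "e j < \<epsilon>*m/16" using ej by simp
          then have "8 * e j < \<epsilon> * m" using ej0 by simp
          then show ?thesis using mpos by (simp add: field_simps)
        qed
        finally show "sdist (h (r j) y) (rat_eval p q y) < \<epsilon>" .
      qed
    qed
  qed
qed

lemma rat_rep_props:
  assumes "rational_map d g"
  shows "coprime (fst (rat_rep g)) (snd (rat_rep g)) \<and>
    g = rat_eval (fst (rat_rep g)) (snd (rat_rep g))"
proof -
  have ex: "\<exists>pq. (case pq of (p, q) \<Rightarrow> coprime p q \<and> max (degree p) (degree q) \<ge> 1 \<and> g = rat_eval p q)"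
    using assms unfolding rational_map_def by auto
  have "case rat_rep g of (p, q) \<Rightarrow> coprime p q \<and> max (degree p) (degree q) \<ge> 1 \<and> g = rat_eval p q"
    unfolding rat_rep_def by (rule someI_ex[OF ex])
  then show ?thesis by (cases "rat_rep g") simp
qed

lemma sconv_of_loc:
  assumes "loc_unif_conv U gs g" "y \<in> U"
  shows "(\<lambda>n. sdist (gs n y) (g y)) \<longlonglongrightarrow> 0"
proof -
  obtain r where r: "r > 0" "\<forall>\<epsilon>>0. eventually (\<lambda>n. \<forall>q. sdist y q < r \<longrightarrow> sdist (gs n q) (g q) < \<epsilon>) sequentially"
    using assms unfolding loc_unif_conv_def by blast
  show ?thesis
  proof (rule tendstoI)
    fix \<epsilon> :: real assume "\<epsilon> > 0"
    then have "eventually (\<lambda>n. \<forall>q. sdist y q < r \<longrightarrow> sdist (gs n q) (g q) < \<epsilon>) sequentially"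
      using r by blast
    then show "eventually (\<lambda>n. dist (sdist (gs n y) (g y)) 0 < \<epsilon>) sequentially"
      by (rule eventually_mono) (use r(1) sdist_nonneg in auto)
  qed
qed

theorem lemma4p12:
  fixes VY :: "'v set" and EY :: "'v set set" and Y :: "'v set"
    and iY :: "'v \<Rightarrow> 'v set \<Rightarrow> csphere"
    and VZ :: "'w set" and EZ :: "'w set set" and Z :: "'w set"
    and iZ :: "'w \<Rightarrow> 'w set \<Rightarrow> csphere"
    and F :: "'v \<Rightarrow> 'w" and f :: "'v \<Rightarrow> csphere \<Rightarrow> csphere" and D :: nat
    and gs :: "nat \<Rightarrow> csphere \<Rightarrow> csphere"
    and ys :: "nat \<Rightarrow> 'v \<Rightarrow> csphere" and zs :: "nat \<Rightarrow> 'w \<Rightarrow> csphere"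
    and phiY :: "nat \<Rightarrow> 'v \<Rightarrow> csphere \<Rightarrow> csphere"
    and phiZ :: "nat \<Rightarrow> 'w \<Rightarrow> csphere \<Rightarrow> csphere"
    and v :: 'v
  assumes "holo_cover_deg VY EY Y iY VZ EZ Z iZ F f D"
    and "v \<in> VY - Y"
    and "vdeg EY Y iY f v = D"
    and "converges_to_cover VY EY Y iY VZ EZ Z iZ F f D gs ys zs phiY phiZ"
  shows "unif_conv (\<lambda>n. phiZ n (F v) \<circ> gs n \<circ> inv (phiY n v)) (f v)"
proof -
  note A = assms
  define h where "h n = phiZ n (F v) \<circ> gs n \<circ> inv (phiY n v)" for n
  have hc: "holo_cover VY EY Y iY VZ EZ Z iZ F f" using A(1) unfolding holo_cover_deg_def by blast
  have vY: "v \<in> VY" "v \<notin> Y" using A(2) by auto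
  have "\<forall>v\<in>VY - Y. (\<exists>d. rational_map d (f v))" using hc unfolding holo_cover_def by meson
  then obtain d where rd: "rational_map d (f v)" using A(2) by blast
  define p where "p = fst (rat_rep (f v))"
  define q where "q = snd (rat_rep (f v))"
  have pq: "coprime p q" "f v = rat_eval p q" using rat_rep_props[OF rd] p_def q_def by auto
  have "rat_degree (f v) = D" using A(3) vY unfolding vdeg_def by simp
  then have md: "max (degree p) (degree q) = D"
    unfolding rat_degree_def p_def q_def by (cases "rat_rep (f v)") simp
  have mr: "marked_rat Y Z F (vdeg EY Y iY f) D (gs n) (ys n) (zs n)" for n
    using A(4) unfolding converges_to_cover_def by blast
  have rg: "rational_map D (gs n)" for n using mr[of n] unfolding marked_rat_def by blast
  have D1: "D \<ge> 1" using rg[of 0] unfolding rational_map_def by blast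
  have cv: "\<forall>v\<in>VY - Y. (\<forall>n. moebius (phiY n v) \<and> moebius (phiZ n (F v))) \<and>
        loc_unif_conv (- Xset EY iY v) (\<lambda>n. phiZ n (F v) \<circ> gs n \<circ> inv (phiY n v)) (f v)"
    using A(4) unfolding converges_to_cover_def by meson
  have mob: "moebius (phiY n v)" "moebius (phiZ n (F v))" for n
    using cv A(2) by blast+
  have luc: "loc_unif_conv (- Xset EY iY v) h (f v)"
    using cv A(2) unfolding h_def[abs_def] by blast
  have ts: "tree_of_spheres VY EY Y iY" using hc unfolding holo_cover_def by (elim conjE)
  have "\<forall>v\<in>VY - Y. card (edges_at EY v) \<ge> 3 \<and> inj_on (iY v) (edges_at EY v)"
    using ts unfolding tree_of_spheres_def by (elim conjE)
  then have "card (edges_at EY v) \<ge> 3" using A(2) by blast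
  then have "finite (edges_at EY v)" by (metis card.infinite not_numeral_le_zero)
  then have finX: "finite (Xset EY iY v)" unfolding Xset_def by simp
  have ex: "\<exists>P Q. degree P \<le> D \<and> degree Q \<le> D \<and> reps D P Q (h n) \<and> nsum D P Q = 1" for n
  proof -
    obtain P0 Q0 where "degree P0 \<le> D" "degree Q0 \<le> D" "reps D P0 Q0 (gs n)"
      using rational_map_reps[OF rg] by blast
    then obtain P1 Q1 where "degree P1 \<le> D" "degree Q1 \<le> D" "reps D P1 Q1 (h n)"
      using reps_comp[OF \<open>reps D P0 Q0 (gs n)\<close> mob(2) mob(1)] unfolding h_def by blast
    then show ?thesis using reps_normalize by blast
  qed
  then have "\<forall>n. \<exists>P. \<exists>Q. degree P \<le> D \<and> degree Q \<le> D \<and> reps D P Q (h n) \<and> nsum D P Q = 1" by blast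
  then obtain P where "\<forall>n. \<exists>Q. degree (P n) \<le> D \<and> degree Q \<le> D \<and> reps D (P n) Q (h n) \<and> nsum D (P n) Q = 1"
    using choice[of "\<lambda>n P. \<exists>Q. degree P \<le> D \<and> degree Q \<le> D \<and> reps D P Q (h n) \<and> nsum D P Q = 1"] by blast
  then obtain Q where PQ': "\<forall>n. degree (P n) \<le> D \<and> degree (Q n) \<le> D \<and> reps D (P n) (Q n) (h n) \<and> nsum D (P n) (Q n) = 1"
    using choice[of "\<lambda>n Q. degree (P n) \<le> D \<and> degree Q \<le> D \<and> reps D (P n) Q (h n) \<and> nsum D (P n) Q = 1"] by blast
  have PQ: "degree (P n) \<le> D \<and> degree (Q n) \<le> D \<and> reps D (P n) (Q n) (h n) \<and> nsum D (P n) (Q n) = 1" for n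
    using PQ' by blast
  have pw: "(\<lambda>n. sdist (h n (Some z)) (rat_eval p q (Some z))) \<longlonglongrightarrow> 0" if "Some z \<notin> Xset EY iY v" for z
    using sconv_of_loc[OF luc] that pq(2) by simp
  show ?thesis
    unfolding unif_conv_def h_def[symmetric]
  proof (intro allI impI)
    fix \<epsilon> :: real assume eps: "\<epsilon> > 0"
    show "eventually (\<lambda>n. \<forall>y. sdist (h n y) (f v y) < \<epsilon>) sequentially"
    proof (rule ccontr)
      assume ne: "\<not> eventually (\<lambda>n. \<forall>y. sdist (h n y) (f v y) < \<epsilon>) sequentially"
      then have "frequently (\<lambda>n. \<not> (\<forall>y. sdist (h n y) (f v y) < \<epsilon>)) sequentially"
        by (simp add: not_eventually)
      then have "infinite {n. \<not> (\<forall>y. sdist (h n y) (f v y) < \<epsilon>)}"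
        unfolding cofinite_eq_sequentially[symmetric] frequently_cofinite by simp
      then obtain s :: "nat \<Rightarrow> nat" where s: "strict_mono s" "\<And>n. \<not> (\<forall>y. sdist (h (s n) y) (f v y) < \<epsilon>)"
        using infinite_enumerate by blast
      have "\<exists>r. strict_mono r \<and> (\<forall>\<epsilon>>0. eventually (\<lambda>j. \<forall>y. sdist ((h \<circ> s) (r j) y) (rat_eval p q y) < \<epsilon>) sequentially)"
      proof (rule core[where P="P \<circ> s" and Q="Q \<circ> s" and X="Xset EY iY v"])
        show "\<And>n. reps D ((P \<circ> s) n) ((Q \<circ> s) n) ((h \<circ> s) n)" using PQ by simp
        show "\<And>n. degree ((P \<circ> s) n) \<le> D" using PQ by simp
        show "\<And>n. degree ((Q \<circ> s) n) \<le> D" using PQ by simp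
        show "\<And>n. nsum D ((P \<circ> s) n) ((Q \<circ> s) n) = 1" using PQ by simp
        show "coprime p q" by (rule pq(1))
        show "max (degree p) (degree q) = D" by (rule md)
        show "D \<ge> 1" by (rule D1)
        show "finite (Xset EY iY v)" by (rule finX)
        fix z assume "Some z \<notin> Xset EY iY v"
        then show "(\<lambda>n. sdist ((h \<circ> s) n (Some z)) (rat_eval p q (Some z))) \<longlonglongrightarrow> 0"
          using LIMSEQ_subseq_LIMSEQ[OF pw s(1)] by (simp add: o_def)
      qed
      then obtain r where r: "eventually (\<lambda>j. \<forall>y. sdist (h (s (r j)) y) (rat_eval p q y) < \<epsilon>) sequentially"
        using eps by auto
      then obtain N where "\<forall>j\<ge>N. \<forall>y. sdist (h (s (r j)) y) (rat_eval p q y) < \<epsilon>"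
        unfolding eventually_sequentially by blast
      then have "\<forall>y. sdist (h (s (r N)) y) (f v y) < \<epsilon>" using pq(2) by simp
      then show False using s(2) by blast
    qed
  qed
qed

end
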